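(* Let $\lambda\in\mathbb{C}$ and complex sequences $(p_l)_{l\in\mathbb{Z}},(q_m)_{m\in\mathbb{Z}}$ be given, with $p_l\ne\lambda$, $q_m\neq\lambda$. Fix $s_l,t_m\in\mathbb{C}$ with $s_l^2=p_l-\lambda$, $t_m^2=q_m-\lambda$ (i.e. $s_l=(p_l-\lambda)^{1/2}$, $t_m=(q_m-\lambda)^{1/2}$), and set $\alpha_l=1/s_l$, $\beta_m=1/t_m$. Let $\phi:\mathbb{Z}^2\to\mathbb{C}$ be a (generic, nonvanishing) solution of \[ \frac{\widetilde{\overline\phi}}{\phi}=\frac{\alpha_l\,\overline\phi-\beta_m\,\widetilde\phi}{\alpha_l\,\widetilde\phi-\beta_m\,\overline\phi}. \] Then \[ u=\frac{s_l\,\overline\phi-t_m\,\widetilde\phi}{\phi},\qquad v=s_l\,\frac{\overline\phi}{\phi} \] satisfy respectively the non-autonomous dKdV equation $\widetilde{\overline u}-u=\frac{q_{m+1}-p_l}{\widetilde u}-\frac{q_m-p_{l+1}}{\overline u}$ and the equation \[ \begin{aligned} &q_m\big(v\overline v-\widetilde v\widetilde{\overline v}\big)^2+\big(v-\widetilde{\overline v}\big)\big(\overline v-\widetilde v\big)\big(\lambda-v\overline v\big)\big(\lambda-\widetilde v\widetilde{\overline v}\big) +\big(p_{l+1}v-p_l\widetilde{\overline v}\big)\big(p_l\overline v-p_{l+1}\widetilde v\big)\\ &\quad-(p_l+p_{l+1})\big(\lambda v\overline v+\lambda\widetilde v\widetilde{\overline v}-2v\overline v\widetilde v\widetilde{\overline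 v}\big) +\big(p_{l+1}v\widetilde v+p_l\overline v\widetilde{\overline v}\big)\big(2\lambda-v\overline v-\widetilde v\widetilde{\overline v}\big)=0. \end{aligned} \]
   Context: Shift notation: for $f:\mathbb{Z}^2\to\mathbb{C}$, $f=f_{l,m}$, $\overline f=f_{l+1,m}$, $\widetilde f=f_{l,m+1}$, $\widetilde{\overline f}=f_{l+1,m+1}$; shifts act on parameters as well ($\overline{p_l}=p_{l+1}$, $\widetilde{q_m}=q_{m+1}$). *)

theory Defs
  imports "HOL-Analysis.Analysis"
begin

end

theory Submission
  imports Defs
begin



lemma polyid:
  fixes a b c d s0 s1 t lam :: complex
  shows "(t^2+lam) * (a*b - c*d)\<^sup>2 + (a - d) * (b - c) * (lam - a*b) * (lam - c*d)
         + ((s1^2+lam) * a - (s0^2+lam) * d) * ((s0^2+lam) * b - (s1^2+lam) * c)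
         - ((s0^2+lam) + (s1^2+lam)) * (lam * a * b + lam * c * d - 2 * a * b * c * d)
         + ((s1^2+lam) * a * c + (s0^2+lam) * b * d) * (2 * lam - a * b - c * d)
       = t^2*(c*d-a*b)^2-(a*(c*d-b*d+s1^2)-d* s0^2) * (b*c*(a-d)-b* s0^2+c* s1^2)"
  by algebra

lemma resultant:
  fixes a b c d s0 s1 t y z :: complex
  assumes E1: "t*c*y^2 - (a*c - s0^2)*y - t*a = 0"
    and E2: "t*d*z^2 - (b*d - s1^2)*z - t*b = 0"
    and Z: "z*a = c*y" and y0: "y \<noteq> 0" and a0: "a \<noteq> 0" and c0: "c \<noteq> 0" and t0: "t \<noteq> 0"
  shows "t^2*(c*d-a*b)^2-(a*(c*d-b*d+s1^2)-d* s0^2) * (b*c*(a-d)-b* s0^2+c* s1^2) = 0"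
proof -
  define A1 B1 C1 A2 B2 C2 where "A1 = t*c" "B1 = -(a*c - s0^2)" "C1 = -t*a"
    "A2 = t*d*c^2" "B2 = -(b*d - s1^2)*a*c" "C2 = -t*b*a^2"
  have e1: "A1*y^2 + B1*y + C1 = 0" using E1 unfolding A1_B1_C1_A2_B2_C2_def by algebra
  have "a^2 * (t*d*z^2 - (b*d - s1^2)*z - t*b) = 0" using E2 by simp
  hence e2: "A2*y^2 + B2*y + C2 = 0" using Z unfolding A1_B1_C1_A2_B2_C2_def by algebra
  define P Q R where "P = A1*B2 - A2*B1" "Q = A1*C2 - A2*C1" "R = B1*C2 - B2*C1"
  have h1: "P*y + Q = 0" using e1 e2 unfolding P_Q_R_def by algebra
  have "y * (Q*y + R) = 0" using e1 e2 unfolding P_Q_R_def by algebra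
  hence h2: "Q*y + R = 0" using y0 by simp
  have "Q^2 = P*R" using h1 h2 by algebra
  hence "t^2*a^2*c^2 * (t^2*(c*d-a*b)^2-(a*(c*d-b*d+s1^2)-d* s0^2) * (b*c*(a-d)-b* s0^2+c* s1^2)) = 0"
    unfolding P_Q_R_def A1_B1_C1_A2_B2_C2_def by algebra
  thus ?thesis using a0 c0 t0 by simp
qed

theorem mainTheorem9:
  fixes lam :: complex
    and p q s t :: "int \<Rightarrow> complex"
    and \<phi> :: "int \<Rightarrow> int \<Rightarrow> complex"
    and u v :: "int \<Rightarrow> int \<Rightarrow> complex"
  assumes hp: "\<And>l. p l \<noteq> lam"
    and hq: "\<And>m. q m \<noteq> lam"
    and hs: "\<And>l. (s l)\<^sup>2 = p l - lam"
    and ht: "\<And>m. (t m)\<^sup>2 = q m - lam"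
    and h\<phi>0: "\<And>l m. \<phi> l m \<noteq> 0"
    and h\<phi>: "\<And>l m. \<phi> (l+1) (m+1) / \<phi> l m
               = ((1 / s l) * \<phi> (l+1) m - (1 / t m) * \<phi> l (m+1))
                 / ((1 / s l) * \<phi> l (m+1) - (1 / t m) * \<phi> (l+1) m)"
    and u_def: "u \<equiv> \<lambda>l m. (s l * \<phi> (l+1) m - t m * \<phi> l (m+1)) / \<phi> l m"
    and v_def: "v \<equiv> \<lambda>l m. s l * \<phi> (l+1) m / \<phi> l m"
    and hu0: "\<And>l m. u l m \<noteq> 0"
  shows "(\<forall>l m. u (l+1) (m+1) - u l m
                 = (q (m+1) - p l) / u l (m+1) - (q m - p (l+1)) / u (l+1) m)
    \<and> (\<forall>l m.
           q m * (v l m * v (l+1) m - v l (m+1) * v (l+1) (m+1))\<^sup>2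
         + (v l m - v (l+1) (m+1)) * (v (l+1) m - v l (m+1))
             * (lam - v l m * v (l+1) m) * (lam - v l (m+1) * v (l+1) (m+1))
         + (p (l+1) * v l m - p l * v (l+1) (m+1)) * (p l * v (l+1) m - p (l+1) * v l (m+1))
         - (p l + p (l+1)) * (lam * v l m * v (l+1) m + lam * v l (m+1) * v (l+1) (m+1)
                              - 2 * v l m * v (l+1) m * v l (m+1) * v (l+1) (m+1))
         + (p (l+1) * v l m * v l (m+1) + p l * v (l+1) m * v (l+1) (m+1))
             * (2 * lam - v l m * v (l+1) m - v l (m+1) * v (l+1) (m+1)) = 0)"
  proof -
  have s0: "s l \<noteq> 0" for l using hs[of l] hp[of l] by auto
  have t0: "t m \<noteq> 0" for m using ht[of m] hq[of m] by auto
  have quad: "\<phi> (l+1) (m+1) * (t m * \<phi> l (m+1) - s l * \<phi> (l+1) m)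
        = \<phi> l m * (t m * \<phi> (l+1) m - s l * \<phi> l (m+1))" for l m
  proof -
    let ?D = "(1 / s l) * \<phi> l (m+1) - (1 / t m) * \<phi> (l+1) m"
    let ?N = "(1 / s l) * \<phi> (l+1) m - (1 / t m) * \<phi> l (m+1)"
    have D: "?D \<noteq> 0"
    proof
      assume "?D = 0"
      hence "\<phi> (l+1) (m+1) / \<phi> l m = 0" using h\<phi>[of l m] by simp
      thus False using h\<phi>0 by simp
    qed
    have "\<phi> (l+1) (m+1) * ?D = \<phi> l m * ?N"
      using h\<phi>[of l m] D h\<phi>0[of l m] by (simp add: field_simps)
    moreover have DD: "s l * t m * ?D = t m * \<phi> l (m+1) - s l * \<phi> (l+1) m"
      using s0[of l] t0[of m] by (simp add: field_simps)
    moreover have NN: "s l * t m * ?N = t m * \<phi> (l+1) m - s l * \<phi> l (m+1)"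
      using s0[of l] t0[of m] by (simp add: field_simps)
    ultimately show ?thesis by algebra
  qed
  have uform: "u l m * \<phi> l m = s l * \<phi> (l+1) m - t m * \<phi> l (m+1)" for l m
    using h\<phi>0[of l m] by (simp add: u_def)
  have A: "\<phi> (l+1) (m+1) * u l m = s l * \<phi> l (m+1) - t m * \<phi> (l+1) m" for l m
  proof -
    have "\<phi> l m * (\<phi> (l+1) (m+1) * u l m) = \<phi> l m * (s l * \<phi> l (m+1) - t m * \<phi> (l+1) m)"
      using quad[of l m] uform[of l m] by algebra
    thus ?thesis using h\<phi>0[of l m] by simp
  qed
  have B: "((s l)^2 - (t m)^2) * \<phi> (l+1) m = u l m * (s l * \<phi> l m + t m * \<phi> (l+1) (m+1))" for l m
    using uform[of l m] A[of l m] by algebra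
  have C: "((s l)^2 - (t m)^2) * \<phi> l (m+1) = u l m * (t m * \<phi> l m + s l * \<phi> (l+1) (m+1))" for l m
    using uform[of l m] A[of l m] by algebra
  have pe: "p l = (s l)^2 + lam" for l using hs[of l] by simp
  have qe: "q m = (t m)^2 + lam" for m using ht[of m] by simp
  have part1: "u (l+1) (m+1) - u l m
                 = (q (m+1) - p l) / u l (m+1) - (q m - p (l+1)) / u (l+1) m" for l m
  proof -
    let ?F = "\<phi> (l+1) (m+1)"
    have F0: "?F \<noteq> 0" by (rule h\<phi>0)
    have e1: "(q (m+1) - p l) / u l (m+1) = - (s l * \<phi> l (m+1) + t (m+1) * \<phi> (l+1) (m+1+1)) / ?F"
    proof -
      have "(q (m+1) - p l) * ?F = - (u l (m+1) * (s l * \<phi> l (m+1) + t (m+1) * \<phi> (l+1) (m+1+1)))"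
        using B[of l "m+1"] pe[of l] qe[of "m+1"] by algebra
      thus ?thesis using F0 hu0[of l "m+1"] by (simp add: field_simps)
    qed
    have e2: "(q m - p (l+1)) / u (l+1) m = - (t m * \<phi> (l+1) m + s (l+1) * \<phi> (l+1+1) (m+1)) / ?F"
    proof -
      have "(q m - p (l+1)) * ?F = - (u (l+1) m * (t m * \<phi> (l+1) m + s (l+1) * \<phi> (l+1+1) (m+1)))"
        using C[of "l+1" m] pe[of "l+1"] qe[of m] by algebra
      thus ?thesis using F0 hu0[of "l+1" m] by (simp add: field_simps)
    qed
    have e3: "u (l+1) (m+1) = (s (l+1) * \<phi> (l+1+1) (m+1) - t (m+1) * \<phi> (l+1) (m+1+1)) / ?F"
      by (simp add: u_def)
    have e4: "u l m = (s l * \<phi> l (m+1) - t m * \<phi> (l+1) m) / ?F"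
      using A[of l m] F0 by (simp add: field_simps)
    show ?thesis unfolding e1 e2 e3 e4 using F0 by (simp add: field_simps)
  qed
  have part2: "q m * (v l m * v (l+1) m - v l (m+1) * v (l+1) (m+1))\<^sup>2
         + (v l m - v (l+1) (m+1)) * (v (l+1) m - v l (m+1))
             * (lam - v l m * v (l+1) m) * (lam - v l (m+1) * v (l+1) (m+1))
         + (p (l+1) * v l m - p l * v (l+1) (m+1)) * (p l * v (l+1) m - p (l+1) * v l (m+1))
         - (p l + p (l+1)) * (lam * v l m * v (l+1) m + lam * v l (m+1) * v (l+1) (m+1)
                              - 2 * v l m * v (l+1) m * v l (m+1) * v (l+1) (m+1))
         + (p (l+1) * v l m * v l (m+1) + p l * v (l+1) m * v (l+1) (m+1))
             * (2 * lam - v l m * v (l+1) m - v l (m+1) * v (l+1) (m+1)) = 0" for l m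
  proof -
    have E: "t m * v l (m+1) * (\<phi> l (m+1) / \<phi> l m)^2 - (v l m * v l (m+1) - (s l)^2) * (\<phi> l (m+1) / \<phi> l m)
            - t m * v l m = 0" for l m
    proof -
      have "t m * v l (m+1) * (\<phi> l (m+1) / \<phi> l m)^2 - (v l m * v l (m+1) - (s l)^2) * (\<phi> l (m+1) / \<phi> l m)
            - t m * v l m = s l / (\<phi> l m)^2 * (\<phi> (l+1) (m+1) * (t m * \<phi> l (m+1) - s l * \<phi> (l+1) m)
             - \<phi> l m * (t m * \<phi> (l+1) m - s l * \<phi> l (m+1)))"
        using h\<phi>0[of l m] h\<phi>0[of l "m+1"] by (simp add: v_def field_simps power2_eq_square)
      thus ?thesis using quad[of l m] by simp
    qed
    have Z: "(\<phi> (l+1) (m+1) / \<phi> (l+1) m) * v l m = v l (m+1) * (\<phi> l (m+1) / \<phi> l m)"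
      using h\<phi>0[of l m] h\<phi>0[of l "m+1"] h\<phi>0[of "l+1" m] by (simp add: v_def field_simps)
    have res: "(t m)^2*(v l (m+1)* v (l+1) (m+1)-v l m* v (l+1) m)^2
        -(v l m*(v l (m+1)* v (l+1) (m+1)-v (l+1) m* v (l+1) (m+1)+(s (l+1))^2)-v (l+1) (m+1)* (s l)^2)
        *(v (l+1) m* v l (m+1) * (v l m-v (l+1) (m+1))-v (l+1) m* (s l)^2+v l (m+1)* (s (l+1))^2) = 0"
      apply (rule resultant[OF E[where l=l and m=m] E[where l="l+1" and m=m] Z])
      using h\<phi>0 s0 t0 by (simp_all add: v_def)
    show ?thesis unfolding pe[of l] pe[of "l+1"] qe[of m] polyid using res .
  qed
  show ?thesis using part1 part2 by blast
qed

end
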